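(* For every real $x$ the following series representations hold (each series converging): $$\operatorname{erf}(x)=\frac{x}{\sqrt{\pi}}+\frac{x}{\sqrt{\pi}}e^{-x^2}+\frac{x^3}{\sqrt{\pi}}\sum_{k=0}^{\infty}\frac{(-1)^k(2k+1)x^{2k}}{(2k+3)(k+1)!};$$ $$\operatorname{erf}(x)=\frac{x}{\sqrt{\pi}}+\frac{x}{\sqrt{\pi}}\Big[1+\frac{x^2}{3}\Big]e^{-x^2}+\frac{x^5}{6\sqrt{\pi}}\sum_{k=0}^{\infty}\frac{(-1)^k(2k+1)(k+1)!\,x^{2k}}{(2k+5)\prod_{r=1}^{k}\Big[\sum_{i=1}^{r}(2i+1)\Big]};$$ $$\operatorname{erf}(x)=\frac{x}{\sqrt{\pi}}\Big[1-\frac{x^2}{30}\Big]+\frac{x}{\sqrt{\pi}}\Big[1+\frac{11x^2}{30}+\frac{x^4}{15}\Big]e^{-x^2}+\frac{x^7}{60\sqrt{\pi}}\sum_{k=0}^{\infty}\frac{(-1)^k(2k+1)(2k+3)(k+1)!\,x^{2k}}{3(2k+7)\prod_{r=2}^{k+1}\Big[2\sum_{i=2}^{r}i\Big]},$$ where empty products equal $1$.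
   Context: $\operatorname{erf}(x)=\frac{2}{\sqrt{\pi}}\int_0^x e^{-\lambda^2}\,d\lambda$. *)

theory Defs
  imports "HOL-Analysis.Analysis"
begin

text \<open>Error function: erf x = 2/sqrt(pi) * (oriented) integral from 0 to x of exp(-t^2).
  The interval integral LBINT t=a..b is oriented (negated when b < a).\<close>
definition erf :: "real \<Rightarrow> real" where
  "erf x = 2 / sqrt pi * (LBINT t=ereal 0..ereal x. exp (- (t\<^sup>2)))"

end

theory Submission
  imports Defs
begin

lemma pw: "x^(2*k) = (x^2)^k" "(-(x^2))^k = (-1)^k * (x^2)^k" for x :: real
  by (rule power_mult, rule power_minus)

lemma cancel1: "(c::real) \<noteq> 0 \<Longrightarrow> c * (a / (b * c)) = a / b"
  by (simp add: field_simps)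

definition ec :: "nat \<Rightarrow> real" where
  "ec m = (if even m then 0 else (-1)^(m div 2) / (fact (m div 2) * real m))"

lemma ec_odd: "ec (2*n+1) = (-1)^n / (fact n * (2 * real n + 1))"
  by (simp add: ec_def)

lemma ec_odd': "ec (Suc (2*n)) = (-1)^n / (fact n * (2 * real n + 1))"
  by (simp add: ec_def)

lemma ec_summable: "summable (\<lambda>n. ec n * y ^ n)"
proof -
  have "summable (\<lambda>n. ec (2*n+1) * y^(2*n+1))"
  proof (rule summable_comparison_test[where g="\<lambda>n. \<bar>y\<bar> * (inverse (fact n) * (y^2)^n)"])
    show "summable (\<lambda>n. \<bar>y\<bar> * (inverse (fact n) * (y^2)^n))"
      by (intro summable_mult summable_exp)
    show "\<exists>N. \<forall>n\<ge>N. norm (ec (2*n+1) * y^(2*n+1)) \<le> \<bar>y\<bar> * (inverse (fact n) * (y^2)^n)"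
    proof (intro exI allI impI)
      fix n :: nat
      have "norm (ec (2*n+1) * y^(2*n+1)) = \<bar>y\<bar> * (y^2)^n / (fact n * (2 * real n + 1))"
        unfolding ec_odd norm_mult norm_divide by (simp add: power_abs power_mult power_add abs_mult)
      also have "\<dots> \<le> \<bar>y\<bar> * (y^2)^n / (fact n)"
        by (intro divide_left_mono) auto
      finally show "norm (ec (2*n+1) * y^(2*n+1)) \<le> \<bar>y\<bar> * (inverse (fact n) * (y^2)^n)"
        by (simp add: field_simps)
    qed
  qed
  thus ?thesis
    by (subst (asm) summable_mono_reindex[of "\<lambda>n. 2*n+1"])
       (auto simp: strict_mono_def ec_def elim!: oddE)
qed

lemma ec_diffs: "(\<lambda>n. diffs ec n * x ^ n) sums exp (-(x^2))"
proof -
  have "(\<lambda>n. (-(x^2))^n /\<^sub>R fact n) sums exp (-(x^2))" by (rule exp_converges)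
  moreover have "(\<lambda>n. (-(x^2))^n /\<^sub>R fact n) = (\<lambda>n. diffs ec (2*n) * x^(2*n))"
  proof
    fix n
    have "diffs ec (2*n) = (2*real n + 1) * ec (2*n+1)" by (simp add: diffs_def)
    hence d: "diffs ec (2*n) = (2*real n + 1) * ((-1)^n / (fact n * (2 * real n + 1)))" unfolding ec_odd .
    have "2 * real n + 1 \<noteq> 0" by simp
    hence "(2 * real n + 1) * ((-1)^n / (fact n * (2 * real n + 1))) = (-1)^n / fact n"
      by (rule cancel1)
    thus "(-(x^2))^n /\<^sub>R fact n = diffs ec (2*n) * x^(2*n)"
      unfolding d pw by (simp add: divide_inverse)
  qed
  ultimately have "(\<lambda>n. diffs ec (2*n) * x^(2*n)) sums exp (-(x^2))" by simp
  thus ?thesis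
    by (subst (asm) sums_mono_reindex[of "\<lambda>n. 2*n"])
       (auto simp: strict_mono_def ec_def diffs_def elim!: evenE)
qed

lemma erf_sums: "(\<lambda>n. 2 / sqrt pi * ((-1)^n / (fact n * (2 * real n + 1))) * x^(2*n+1)) sums erf x"
proof -
  define E where "E = (\<lambda>x::real. \<Sum>n. ec n * x^n)"
  have D: "(E has_field_derivative exp (-(y^2))) (at y)" for y
    using termdiffs_strong_converges_everywhere[of ec y, OF ec_summable] ec_diffs[of y]
    unfolding E_def by (simp add: sums_iff)
  have "(\<lambda>n. ec n * 0^n) = (\<lambda>n. 0)" by (auto simp: ec_def fun_eq_iff)
  hence E0: "E 0 = 0" unfolding E_def by simp
  have "(LBINT t=ereal 0..ereal x. exp (- (t\<^sup>2))) = E x - E 0"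
    by (rule interval_integral_FTC_finite)
       (auto intro!: continuous_intros has_vector_derivative_at_within DERIV_subset[OF D]
         simp: has_real_derivative_iff_has_vector_derivative[symmetric])
  hence I: "erf x = 2 / sqrt pi * E x" by (simp add: erf_def E0)
  have "(\<lambda>n. ec n * x^n) sums E x" unfolding E_def using ec_summable by (rule summable_sums)
  hence "(\<lambda>n. ec (2*n+1) * x^(2*n+1)) sums E x"
    by (subst sums_mono_reindex[of "\<lambda>n. 2*n+1"])
       (auto simp: strict_mono_def ec_def elim!: oddE)
  hence "(\<lambda>n. 2 / sqrt pi * (ec (2*n+1) * x^(2*n+1))) sums (2 / sqrt pi * E x)"
    by (rule sums_mult)
  thus ?thesis by (simp add: I ec_odd' mult.assoc)
qed


lemma shiftk: fixes f :: "nat \<Rightarrow> real" shows "f sums s \<Longrightarrow> (\<lambda>n. if n < m then 0 else f (n - m)) sums s"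
proof -
  assume "f sums s"
  moreover have "(\<lambda>i. (\<lambda>n. if n < m then 0 else f (n - m)) (i + m)) = f" by simp
  ultimately show ?thesis
    using sums_zero_iff_shift[of m "\<lambda>n. if n < m then 0 else f (n - m)" s] by simp
qed

lemma le_inv_fact: "0 \<le> (a::real) \<Longrightarrow> a \<le> 1 \<Longrightarrow> a * inverse (fact k) \<le> inverse (fact k)"
  by (simp add: mult_left_le_one_le)

lemma summ_cmp:
  fixes f :: "nat \<Rightarrow> real"
  assumes "\<And>k. \<bar>f k\<bar> \<le> inverse (fact k) * (x^2)^k"
  shows "summable f"
  by (rule summable_comparison_test[OF _ summable_exp[of "x^2"]]) (use assms in auto)


lemma pS1: "(-(x^2))^(Suc k) = -(x^2) * ((-1)^k * (x^2)^k)" for x :: real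
  unfolding pw(2)[symmetric] by (rule power_Suc)
lemma pS2: "(-(x^2))^(Suc (Suc k)) = x^4 * ((-1)^k * (x^2)^k)" for x :: real
proof -
  have "(-(x^2))^(Suc (Suc k)) = ((-(x^2))*(-(x^2))) * (-(x^2))^k" by (simp only: power_Suc mult.assoc)
  moreover have "(-(x^2))*(-(x^2)) = x^4" by algebra
  ultimately show ?thesis by (simp only: pw)
qed
lemma pS3: "(-(x^2))^(Suc (Suc (Suc k))) = -(x^6) * ((-1)^k * (x^2)^k)" for x :: real
proof -
  have "(-(x^2))^(Suc (Suc (Suc k))) = ((-(x^2))*(-(x^2))*(-(x^2))) * (-(x^2))^k" by (simp only: power_Suc mult.assoc)
  moreover have "(-(x^2))*(-(x^2))*(-(x^2)) = -(x^6)" by algebra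
  ultimately show ?thesis by (simp only: pw)
qed
lemma fS1: "fact (Suc k) = (real k + 1) * fact k" by (simp add: algebra_simps)
lemma fS2: "fact (Suc (Suc k)) = (real k + 2) * ((real k + 1) * fact k)" by (simp add: algebra_simps)
lemma fS3: "fact (Suc (Suc (Suc k))) = (real k + 3) * ((real k + 2) * ((real k + 1) * fact k))" by (simp add: algebra_simps)

lemma fid2: fixes k F s X :: real assumes "F \<noteq> 0" "k+1 \<noteq> 0" "k+2 \<noteq> 0" "2*k+5 \<noteq> 0"
  shows "s*(2*k+1)*((k+1)*F)*X/((2*k+5)*(F*((k+2)*((k+1)*F))/2)) = s*(2*(2*k+1))/((2*k+5)*(k+2)*F)*X"
proof -
  have "(2*k+5)*(F*((k+2)*((k+1)*F))) \<noteq> 0" "(2*k+5)*(k+2)*F \<noteq> 0"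
    using assms by simp_all
  thus ?thesis
    apply (simp only: times_divide_eq_right divide_divide_eq_right times_divide_eq_left)
    apply (subst frac_eq_eq)
    apply assumption+
    by algebra
qed

lemma alg2:
  fixes x q s X F k :: real
  assumes "q \<noteq> 0" "F \<noteq> 0" "k+1 \<noteq> 0" "k+2 \<noteq> 0" "2*k+5 \<noteq> 0"
  shows "0 + x/q*(x^4*(s*X)/((k+2)*((k+1)*F))) + x^3/(3*q)*(-(x^2)*(s*X)/((k+1)*F))
    + x^5/(6*q)*(s*(2*(2*k+1))/((2*k+5)*(k+2)*F)*X)
    = 2/q*(s/(((k+2)*((k+1)*F))*(2*k+5)))*(x^5*X)"
proof -
  define A where "A = s*X*x^5/(q*F)"
  have t1: "x/q*(x^4*(s*X)/((k+2)*((k+1)*F))) = A * (1/((k+2)*(k+1)))"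
    unfolding A_def using assms by (simp add: field_simps power_add[symmetric] eval_nat_numeral)
  have t2: "x^3/(3*q)*(-(x^2)*(s*X)/((k+1)*F)) = A * (-1/(3*(k+1)))"
    unfolding A_def using assms by (simp add: field_simps power_add[symmetric] eval_nat_numeral)
  have t3: "x^5/(6*q)*(s*(2*(2*k+1))/((2*k+5)*(k+2)*F)*X) = A * ((2*(2*k+1))/(6*(2*k+5)*(k+2)))"
    unfolding A_def using assms by (simp add: field_simps)
  have t4: "2/q*(s/(((k+2)*((k+1)*F))*(2*k+5)))*(x^5*X) = A * (2/((k+2)*(k+1)*(2*k+5)))"
    unfolding A_def using assms by (simp add: field_simps)
  have r: "1/((k+2)*(k+1)) + -1/(3*(k+1)) + (2*(2*k+1))/(6*(2*k+5)*(k+2)) = 2/((k+2)*(k+1)*(2*k+5))"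
    using assms by (simp add: divide_simps) algebra
  show ?thesis unfolding t1 t2 t3 t4 r[symmetric] by (simp only: distrib_left add_0_left)
qed

lemma small2a: fixes x q :: real assumes "q \<noteq> 0"
  shows "x/q*(-(x^2)) + x^3/(3*q) = 2/q*(-1/3)*x^3"
  using assms by (simp add: field_simps power2_eq_square power3_eq_cube)
lemma small3a: fixes x q :: real assumes "q \<noteq> 0"
  shows "x/q*(-(x^2)) + -(x^3/(30*q)) + 11*x^3/(30*q) = 2/q*(-1/3)*x^3"
  using assms by (simp add: field_simps power2_eq_square power3_eq_cube)
lemma small3b: fixes x q :: real assumes "q \<noteq> 0"
  shows "x/q*(x^4/2) + 11*x^3/(30*q)*(-(x^2)) + x^5/(15*q) = 2/q*(1/10)*x^5"
proof -
  have "x^4 = x*x*x*x" "x^5 = x*x*x*x*x" "x^3 = x*x*x" by algebra+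
  thus ?thesis using assms by (simp add: field_simps power2_eq_square)
qed

lemma sumP1: "(\<Sum>i=1..r. (2 * real i + 1)) = real r * (real r + 2)"
  by (induction r) (simp_all add: sum.cl_ivl_Suc algebra_simps)

lemma prodP1: "(\<Prod>r=1..k. \<Sum>i=1..r. (2 * real i + 1)) = fact k * fact (k+2) / 2"
proof (induction k)
  case 0 then show ?case by simp
next
  case (Suc k)
  have "(\<Prod>r=1..Suc k. \<Sum>i=1..r. (2 * real i + 1)) = (\<Prod>r=1..k. \<Sum>i=1..r. (2 * real i + 1)) * (\<Sum>i=1..Suc k. (2 * real i + 1))"
    by (rule prod.cl_ivl_Suc[THEN trans]) simp
  also have "\<dots> = fact k * fact (k+2) / 2 * (real (Suc k) * (real (Suc k) + 2))"
    by (subst Suc.IH) (simp only: sumP1)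
  also have "\<dots> = fact (Suc k) * fact (Suc k + 2) / 2"
    by (simp add: algebra_simps)
  finally show ?case .
qed

lemma sumP2: "2 * (\<Sum>i=2..Suc r. real i) = real r * (real r + 3)"
proof (induction r)
  case 0 then show ?case by simp
next
  case (Suc r)
  have "(\<Sum>i=2..Suc (Suc r). real i) = (\<Sum>i=2..Suc r. real i) + real (Suc (Suc r))"
    by (rule sum.cl_ivl_Suc[THEN trans]) simp
  then show ?case using Suc.IH by (simp add: algebra_simps)
qed

lemma prodP2: "(\<Prod>r=2..k+1. 2 * (\<Sum>i=2..r. real i)) = fact k * fact (k+3) / 6"
proof (induction k)
  case 0 then show ?case by (simp add: numeral_3_eq_3)
next
  case (Suc k)
  have "(\<Prod>r=2..Suc k+1. 2 * (\<Sum>i=2..r. real i)) = (\<Prod>r=2..k+1. 2 * (\<Sum>i=2..r. real i)) * (2 * (\<Sum>i=2..Suc (Suc k). real i))"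
    using prod.cl_ivl_Suc[of "\<lambda>r. 2 * (\<Sum>i=2..r. real i)" 2 "k+1"] by simp
  also have "\<dots> = fact k * fact (k+3) / 6 * (real (Suc k) * (real (Suc k) + 3))"
    by (subst Suc.IH) (simp only: sumP2)
  also have "\<dots> = fact (Suc k) * fact (Suc (k + 3)) / 6"
    unfolding fact_Suc[of k] fact_Suc[of "k+3"] by (simp add: algebra_simps)
  finally show ?case by (simp only: add_Suc)
qed

lemma expser: "(\<lambda>n. c * ((-(x^2))^n / fact n)) sums (c * exp (-(x^2::real)))"
  using sums_mult[OF exp_converges[of "-(x^2)"], of c] by (simp add: divide_inverse mult.commute)


lemma fid3: fixes k F s X :: real assumes "F \<noteq> 0" "k+1 \<noteq> 0" "k+2 \<noteq> 0" "k+3 \<noteq> 0" "2*k+7 \<noteq> 0"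
  shows "s*(2*k+1)*(2*k+3)*((k+1)*F)*X/(3*(2*k+7)*(F*((k+3)*((k+2)*((k+1)*F)))/6)) = s*(2*(2*k+1)*(2*k+3))/((2*k+7)*(k+3)*(k+2)*F)*X"
proof -
  have "3*(2*k+7)*(F*((k+3)*((k+2)*((k+1)*F)))) \<noteq> 0" "(2*k+7)*(k+3)*(k+2)*F \<noteq> 0"
    using assms by simp_all
  thus ?thesis
    apply (simp only: times_divide_eq_right divide_divide_eq_right times_divide_eq_left)
    apply (subst frac_eq_eq)
    apply assumption+
    by algebra
qed
lemma cubic: "2*(2*real k+1)*(2*real k+3) \<le> (2*real k+7)*(real k+3)*(real k+2)"
proof -
  have a: "2*real k+1 \<le> 2*real k+7" by simp
  have e: "(real k+3)*(real k+2) = real k*real k + 5*real k + 6" by algebra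
  have "0 \<le> real k * real k" "0 \<le> real k" by simp_all
  hence b: "2*(2*real k+3) \<le> (real k+3)*(real k+2)" unfolding e by (simp add: ring_distribs)
  have "(2*real k+1) * (2*(2*real k+3)) \<le> (2*real k+7) * ((real k+3)*(real k+2))"
    by (rule mult_mono[OF a b]) simp_all
  thus ?thesis by (simp only: mult.assoc mult.left_commute)
qed

lemma alg3:
  fixes x q s X F k :: real
  assumes "q \<noteq> 0" "F \<noteq> 0" "k+1 \<noteq> 0" "k+2 \<noteq> 0" "k+3 \<noteq> 0" "2*k+7 \<noteq> 0"
  shows "0 + 0 + x/q*(-(x^6)*(s*X)/((k+3)*((k+2)*((k+1)*F)))) + 11*x^3/(30*q)*(x^4*(s*X)/((k+2)*((k+1)*F)))
    + x^5/(15*q)*(-(x^2)*(s*X)/((k+1)*F)) + x^7/(60*q)*(s*(2*(2*k+1)*(2*k+3))/((2*k+7)*(k+3)*(k+2)*F)*X)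
    = 2/q*(-s/(((k+3)*((k+2)*((k+1)*F)))*(2*k+7)))*(x^7*X)"
proof -
  define A where "A = s*X*x^7/(q*F)"
  have t1: "x/q*(-(x^6)*(s*X)/((k+3)*((k+2)*((k+1)*F)))) = A * (-1/((k+3)*(k+2)*(k+1)))"
    unfolding A_def using assms by (simp add: field_simps power_add[symmetric] eval_nat_numeral)
  have t2: "11*x^3/(30*q)*(x^4*(s*X)/((k+2)*((k+1)*F))) = A * (11/(30*(k+2)*(k+1)))"
    unfolding A_def using assms by (simp add: field_simps power_add[symmetric] eval_nat_numeral)
  have t3: "x^5/(15*q)*(-(x^2)*(s*X)/((k+1)*F)) = A * (-1/(15*(k+1)))"
    unfolding A_def using assms by (simp add: field_simps power_add[symmetric] eval_nat_numeral)
  have t4: "x^7/(60*q)*(s*(2*(2*k+1)*(2*k+3))/((2*k+7)*(k+3)*(k+2)*F)*X) = A * ((2*(2*k+1)*(2*k+3))/(60*(2*k+7)*(k+3)*(k+2)))"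
    unfolding A_def using assms by (simp add: field_simps)
  have t5: "2/q*(-s/(((k+3)*((k+2)*((k+1)*F)))*(2*k+7)))*(x^7*X) = A * (-2/((k+3)*(k+2)*(k+1)*(2*k+7)))"
    unfolding A_def using assms by (simp add: field_simps)
  have r: "-1/((k+3)*(k+2)*(k+1)) + 11/(30*(k+2)*(k+1)) + -1/(15*(k+1)) + (2*(2*k+1)*(2*k+3))/(60*(2*k+7)*(k+3)*(k+2))
      = -2/((k+3)*(k+2)*(k+1)*(2*k+7))"
    using assms by (simp add: divide_simps) algebra
  show ?thesis unfolding t1 t2 t3 t4 t5 r[symmetric] by (simp only: distrib_left add_0_left)
qed

lemma id1:
  fixes x :: real
  shows "summable (\<lambda>k::nat. (-1)^k * (2*k+1) * x^(2*k) / ((2*k+3) * fact (k+1))) \<and>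
    erf x = x / sqrt pi + x / sqrt pi * exp (- (x\<^sup>2))
      + x^3 / sqrt pi * (\<Sum>k. (-1)^k * (2*k+1) * x^(2*k) / ((2*k+3) * fact (k+1)))"
proof -
  define f where "f = (\<lambda>k::nat. (-1)^k * (2*k+1) * x^(2*k) / ((2*k+3) * fact (k+1)))"
  have f_eq: "f = (\<lambda>k. (-1)^k * (2*real k+1) * x^(2*k) / ((2*real k+3) * fact (k+1)))"
    unfolding f_def by (simp add: fun_eq_iff algebra_simps)
  have sf: "summable f" unfolding f_eq
  proof (rule summ_cmp[of _ x])
    fix k :: nat
    have "(2*real k+1) / ((2*real k+3) * fact (k+1)) = ((2*real k+1) / ((2*real k+3) * (k+1))) * inverse (fact k)"
      by (simp add: field_simps)
    also have "\<dots> \<le> inverse (fact k)"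
      by (rule le_inv_fact) (auto simp: divide_le_eq_1 algebra_simps)
    finally have "(2*real k+1) / ((2*real k+3) * fact (k+1)) \<le> inverse (fact k)" .
    hence "(2*real k+1) / ((2*real k+3) * fact (k+1)) * (x^2)^k \<le> inverse (fact k) * (x^2)^k"
      by (rule mult_right_mono) simp
    moreover have "\<bar>(-1)^k * (2*real k+1) * x^(2*k) / ((2*real k+3) * fact (k+1))\<bar> = (2*real k+1) / ((2*real k+3) * fact (k+1)) * (x^2)^k"
      by (simp add: abs_mult pw power_abs abs_divide)
    ultimately show "\<bar>(-1)^k * (2*real k+1) * x^(2*k) / ((2*real k+3) * fact (k+1))\<bar> \<le> inverse (fact k) * (x^2)^k"
      by simp
  qed
  define S where "S = suminf f"
  have fS: "f sums S" using sf S_def summable_sums by blast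
  have T1: "(\<lambda>n. if n = 0 then x / sqrt pi else 0) sums (x / sqrt pi)"
    using sums_single[of 0 "\<lambda>_. x / sqrt pi"] by simp
  have T2: "(\<lambda>n. x / sqrt pi * ((-(x^2))^n /\<^sub>R fact n)) sums (x / sqrt pi * exp (-(x^2)))"
    by (rule sums_mult, rule exp_converges)
  have T3: "(\<lambda>n. if n < 1 then 0 else x^3 / sqrt pi * f (n - 1)) sums (x^3 / sqrt pi * S)"
    using shiftk[OF sums_mult[OF fS, of "x^3 / sqrt pi"], of 1] by simp
  have "(\<lambda>n. (if n = 0 then x / sqrt pi else 0) + x / sqrt pi * ((-(x^2))^n /\<^sub>R fact n)
     + (if n < 1 then 0 else x^3 / sqrt pi * f (n - 1))) sums
     (x / sqrt pi + x / sqrt pi * exp (-(x^2)) + x^3 / sqrt pi * S)"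
    by (intro sums_add T1 T2 T3)
  also have "(\<lambda>n. (if n = 0 then x / sqrt pi else 0) + x / sqrt pi * ((-(x^2))^n /\<^sub>R fact n)
     + (if n < 1 then 0 else x^3 / sqrt pi * f (n - 1))) =
     (\<lambda>n. 2 / sqrt pi * ((-1)^n / (fact n * (2 * real n + 1))) * x^(2*n+1))"
  proof
    fix n show "(if n = 0 then x / sqrt pi else 0) + x / sqrt pi * ((-(x^2))^n /\<^sub>R fact n)
     + (if n < 1 then 0 else x^3 / sqrt pi * f (n - 1)) =
     2 / sqrt pi * ((-1)^n / (fact n * (2 * real n + 1))) * x^(2*n+1)"
    proof (cases n)
      case 0 then show ?thesis by simp
    next
      case (Suc k)
      have sp: "sqrt pi > 0" by simp
      have "2*Suc k+1 = 3 + 2*k" by simp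
      hence e1: "x^(2*Suc k+1) = x^3 * (x^2)^k" by (simp only: power_add power_mult)
      have e2: "(-(x^2))^(Suc k) = -(x^2) * ((-1)^k * (x^2)^k)" by (rule pS1)
      have e3: "x^(2*k) = (x^2)^k" by (simp add: power_mult)
      have fs: "fact (Suc k) = (real k + 1) * fact k" by simp
      show ?thesis unfolding Suc f_eq e1 e2 e3 fs
        using sp apply (simp add: divide_simps pw(1))
        by algebra
    qed
  qed
  finally have "erf x = x / sqrt pi + x / sqrt pi * exp (-(x^2)) + x^3 / sqrt pi * S"
    using erf_sums sums_unique2 by blast
  thus ?thesis using sf unfolding S_def f_def by simp
qed


lemma id2:
  fixes x :: real
  shows "summable (\<lambda>k::nat. (-1)^k * (2*k+1) * fact (k+1) * x^(2*k) /
        ((2*k+5) * (\<Prod>r=1..k. \<Sum>i=1..r. (2 * real i + 1)))) \<and>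
    erf x = x / sqrt pi + x / sqrt pi * (1 + x\<^sup>2 / 3) * exp (- (x\<^sup>2))
      + x^5 / (6 * sqrt pi) * (\<Sum>k. (-1)^k * (2*k+1) * fact (k+1) * x^(2*k) /
        ((2*k+5) * (\<Prod>r=1..k. \<Sum>i=1..r. (2 * real i + 1))))"
proof -
  define f where "f = (\<lambda>k::nat. (-1)^k * (2*k+1) * fact (k+1) * x^(2*k) /
        ((2*k+5) * (\<Prod>r=1..k. \<Sum>i=1..r. (2 * real i + 1))))"
  have f_eq: "f = (\<lambda>k. (-1)^k * (2*(2*real k+1)) / ((2*real k+5)*(real k+2)*fact k) * (x^2)^k)"
  proof
    fix k
    have f1: "fact (k+1) = (real k+1) * fact k" by simp
    have f2: "fact (k+2) = (real k+2) * ((real k+1) * fact k)" by (simp add: numeral_2_eq_2 algebra_simps)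
    have "f k = (-1)^k*(2*real k+1)*fact (k+1)*(x^2)^k/((2*real k+5)*(fact k * fact (k+2)/2))"
      unfolding f_def prodP1 pw by (simp only: of_int_mult of_int_power of_int_minus of_int_1 of_int_of_nat_eq of_int_fact of_int_add of_int_numeral of_nat_mult of_nat_add of_nat_numeral of_nat_1)
    also have "\<dots> = (-1)^k*(2*real k+1)*((real k+1) * fact k)*(x^2)^k/((2*real k+5)*(fact k * ((real k+2) * ((real k+1) * fact k))/2))"
      unfolding f1 f2 by (simp only: mult.assoc)
    also have "\<dots> = (-1)^k * (2*(2*real k+1)) / ((2*real k+5)*(real k+2)*fact k) * (x^2)^k"
      by (rule fid2) simp_all
    finally show "f k = (-1)^k * (2*(2*real k+1)) / ((2*real k+5)*(real k+2)*fact k) * (x^2)^k" .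
  qed
  have sf: "summable f" unfolding f_eq
  proof (rule summ_cmp[of _ x])
    fix k :: nat
    have "(2*(2*real k+1)) / ((2*real k+5)*(real k+2)*fact k) = ((2*(2*real k+1)) / ((2*real k+5)*(real k+2))) * inverse (fact k)"
      by (simp add: field_simps)
    also have "\<dots> \<le> inverse (fact k)"
      by (rule le_inv_fact) (auto simp: divide_le_eq_1 algebra_simps)
    finally have "(2*(2*real k+1)) / ((2*real k+5)*(real k+2)*fact k) * (x^2)^k \<le> inverse (fact k) * (x^2)^k"
      by (rule mult_right_mono) simp
    moreover have "\<bar>(-1)^k * (2*(2*real k+1)) / ((2*real k+5)*(real k+2)*fact k) * (x^2)^k\<bar> = (2*(2*real k+1)) / ((2*real k+5)*(real k+2)*fact k) * (x^2)^k"
      by (simp add: abs_mult power_abs abs_divide)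
    ultimately show "\<bar>(-1)^k * (2*(2*real k+1)) / ((2*real k+5)*(real k+2)*fact k) * (x^2)^k\<bar> \<le> inverse (fact k) * (x^2)^k"
      by simp
  qed
  define S where "S = suminf f"
  have fS: "f sums S" using sf S_def summable_sums by blast
  have sp: "sqrt pi > 0" by simp
  have T1: "(\<lambda>n. if n = 0 then x / sqrt pi else 0) sums (x / sqrt pi)"
    using sums_single[of 0 "\<lambda>_. x / sqrt pi"] by simp
  have T2: "(\<lambda>n. x / sqrt pi * ((-(x^2))^n / fact n)) sums (x / sqrt pi * exp (-(x^2)))"
    by (rule expser)
  have T3: "(\<lambda>n. if n < 1 then 0 else x^3 / (3 * sqrt pi) * ((-(x^2))^(n-1) / fact (n-1))) sums (x^3 / (3 * sqrt pi) * exp (-(x^2)))"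
    by (rule shiftk[OF expser])
  have T4: "(\<lambda>n. if n < 2 then 0 else x^5 / (6 * sqrt pi) * f (n - 2)) sums (x^5 / (6 * sqrt pi) * S)"
    by (rule shiftk[OF sums_mult[OF fS]])
  have "(\<lambda>n. (if n = 0 then x / sqrt pi else 0) + x / sqrt pi * ((-(x^2))^n / fact n)
     + (if n < 1 then 0 else x^3 / (3 * sqrt pi) * ((-(x^2))^(n-1) / fact (n-1)))
     + (if n < 2 then 0 else x^5 / (6 * sqrt pi) * f (n - 2))) sums
     (x / sqrt pi + x / sqrt pi * exp (-(x^2)) + x^3 / (3 * sqrt pi) * exp (-(x^2)) + x^5 / (6 * sqrt pi) * S)"
    by (intro sums_add T1 T2 T3 T4)
  also have "(\<lambda>n. (if n = 0 then x / sqrt pi else 0) + x / sqrt pi * ((-(x^2))^n / fact n)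
     + (if n < 1 then 0 else x^3 / (3 * sqrt pi) * ((-(x^2))^(n-1) / fact (n-1)))
     + (if n < 2 then 0 else x^5 / (6 * sqrt pi) * f (n - 2))) =
     (\<lambda>n. 2 / sqrt pi * ((-1)^n / (fact n * (2 * real n + 1))) * x^(2*n+1))"
  proof
    fix n show "(if n = 0 then x / sqrt pi else 0) + x / sqrt pi * ((-(x^2))^n / fact n)
     + (if n < 1 then 0 else x^3 / (3 * sqrt pi) * ((-(x^2))^(n-1) / fact (n-1)))
     + (if n < 2 then 0 else x^5 / (6 * sqrt pi) * f (n - 2)) =
     2 / sqrt pi * ((-1)^n / (fact n * (2 * real n + 1))) * x^(2*n+1)"
    proof (cases n)
      case 0 then show ?thesis by simp
    next
      case (Suc m)
      show ?thesis
      proof (cases m)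
        case 0
        have "sqrt pi \<noteq> 0" by simp
        from small2a[OF this, of x] show ?thesis unfolding Suc 0 by simp
      next
        case (Suc k)
        have c: "(Suc (Suc k) = 0) = False" "(Suc (Suc k) < 1) = False" "(Suc (Suc k) < 2) = False"
          "Suc (Suc k) - 1 = Suc k" "Suc (Suc k) - 2 = k" by simp_all
        have "2*Suc (Suc k)+1 = 5 + 2*k" by simp
        hence e1: "x^(2*Suc (Suc k)+1) = x^5 * (x^2)^k" by (simp only: power_add power_mult)
        have e2: "(-(x^2))^(Suc (Suc k)) = x^4 * ((-1)^k * (x^2)^k)" by (rule pS2)
        have e3: "(-(x^2))^(Suc k) = -(x^2) * ((-1)^k * (x^2)^k)" by (rule pS1)
        have e4: "fact (Suc (Suc k)) = (real k + 2) * ((real k + 1) * fact k)" by (rule fS2)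
        have e5: "fact (Suc k) = (real k + 1) * fact k" by (rule fS1)
        have e6: "(-1::real)^(Suc (Suc k)) = (-1)^k" by simp
        have e7: "2 * real (Suc (Suc k)) + 1 = 2 * real k + 5" by simp
        show ?thesis unfolding \<open>n = Suc m\<close> \<open>m = Suc k\<close>
          apply (simp only: c if_False if_True)
          unfolding e1 e2 e3 e4 e5 e6 e7 f_eq
          by (rule alg2) simp_all
      qed
    qed
  qed
  finally have "erf x = x / sqrt pi + x / sqrt pi * exp (-(x^2)) + x^3 / (3 * sqrt pi) * exp (-(x^2)) + x^5 / (6 * sqrt pi) * S"
    using erf_sums sums_unique2 by blast
  also have "\<dots> = x / sqrt pi + x / sqrt pi * (1 + x\<^sup>2 / 3) * exp (- (x\<^sup>2)) + x^5 / (6 * sqrt pi) * S"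
    by (simp add: divide_simps) algebra
  finally show ?thesis using sf unfolding S_def f_def by simp
qed


lemma id3:
  fixes x :: real
  shows "summable (\<lambda>k::nat. (-1)^k * (2*k+1) * (2*k+3) * fact (k+1) * x^(2*k) /
        (3 * (2*k+7) * (\<Prod>r=2..k+1. 2 * (\<Sum>i=2..r. real i)))) \<and>
    erf x = x / sqrt pi * (1 - x\<^sup>2 / 30)
      + x / sqrt pi * (1 + 11 * x\<^sup>2 / 30 + x^4 / 15) * exp (- (x\<^sup>2))
      + x^7 / (60 * sqrt pi) * (\<Sum>k. (-1)^k * (2*k+1) * (2*k+3) * fact (k+1) * x^(2*k) /
        (3 * (2*k+7) * (\<Prod>r=2..k+1. 2 * (\<Sum>i=2..r. real i))))"
proof -
  define f where "f = (\<lambda>k::nat. (-1)^k * (2*k+1) * (2*k+3) * fact (k+1) * x^(2*k) /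
        (3 * (2*k+7) * (\<Prod>r=2..k+1. 2 * (\<Sum>i=2..r. real i))))"
  have f_eq: "f = (\<lambda>k. (-1)^k * (2*(2*real k+1)*(2*real k+3)) / ((2*real k+7)*(real k+3)*(real k+2)*fact k) * (x^2)^k)"
  proof
    fix k
    have f2: "fact (k+3) = (real k+3) * ((real k+2) * ((real k+1) * fact k))" by (simp add: numeral_3_eq_3 algebra_simps)
    have f1: "fact (k+1) = (real k+1) * fact k" by simp
    have "f k = (-1)^k*(2*real k+1)*(2*real k+3)*fact (k+1)*(x^2)^k/(3*(2*real k+7)*(fact k * fact (k+3)/6))"
      unfolding f_def prodP2 pw by (simp only: of_int_mult of_int_power of_int_minus of_int_1 of_int_of_nat_eq of_int_fact of_int_add of_int_numeral of_nat_mult of_nat_add of_nat_numeral of_nat_1)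
    also have "\<dots> = (-1)^k*(2*real k+1)*(2*real k+3)*((real k+1) * fact k)*(x^2)^k/(3*(2*real k+7)*(fact k * ((real k+3) * ((real k+2) * ((real k+1) * fact k)))/6))"
      unfolding f1 f2 by (simp only: mult.assoc)
    also have "\<dots> = (-1)^k * (2*(2*real k+1)*(2*real k+3)) / ((2*real k+7)*(real k+3)*(real k+2)*fact k) * (x^2)^k"
      by (rule fid3) simp_all
    finally show "f k = (-1)^k * (2*(2*real k+1)*(2*real k+3)) / ((2*real k+7)*(real k+3)*(real k+2)*fact k) * (x^2)^k" .
  qed
  have sf: "summable f" unfolding f_eq
  proof (rule summ_cmp[of _ x])
    fix k :: nat
    have "(2*(2*real k+1)*(2*real k+3)) / ((2*real k+7)*(real k+3)*(real k+2)*fact k) = ((2*(2*real k+1)*(2*real k+3)) / ((2*real k+7)*(real k+3)*(real k+2))) * inverse (fact k)"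
      by (simp add: field_simps)
    also have "\<dots> \<le> inverse (fact k)"
    proof (rule le_inv_fact)
      have "2*(2*real k+1)*(2*real k+3) \<le> (2*real k+7)*(real k+3)*(real k+2)"
        by (rule cubic)
      thus "(2*(2*real k+1)*(2*real k+3)) / ((2*real k+7)*(real k+3)*(real k+2)) \<le> 1"
        by (simp add: divide_le_eq_1)
    qed simp
    finally have "(2*(2*real k+1)*(2*real k+3)) / ((2*real k+7)*(real k+3)*(real k+2)*fact k) * (x^2)^k \<le> inverse (fact k) * (x^2)^k"
      by (rule mult_right_mono) simp
    moreover have "\<bar>(-1)^k * (2*(2*real k+1)*(2*real k+3)) / ((2*real k+7)*(real k+3)*(real k+2)*fact k) * (x^2)^k\<bar> = (2*(2*real k+1)*(2*real k+3)) / ((2*real k+7)*(real k+3)*(real k+2)*fact k) * (x^2)^k"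
      by (simp add: abs_mult power_abs abs_divide)
    ultimately show "\<bar>(-1)^k * (2*(2*real k+1)*(2*real k+3)) / ((2*real k+7)*(real k+3)*(real k+2)*fact k) * (x^2)^k\<bar> \<le> inverse (fact k) * (x^2)^k"
      by simp
  qed
  define S where "S = suminf f"
  have fS: "f sums S" using sf S_def summable_sums by blast
  have sp: "sqrt pi > 0" by simp
  have T1: "(\<lambda>n. if n = 0 then x / sqrt pi else 0) sums (x / sqrt pi)"
    using sums_single[of 0 "\<lambda>_. x / sqrt pi"] by simp
  have T1b: "(\<lambda>n. if n = 1 then - (x^3 / (30 * sqrt pi)) else 0) sums (- (x^3 / (30 * sqrt pi)))"
    using sums_single[of 1 "\<lambda>_. - (x^3 / (30 * sqrt pi))"] by simp
  have T2: "(\<lambda>n. x / sqrt pi * ((-(x^2))^n / fact n)) sums (x / sqrt pi * exp (-(x^2)))"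
    by (rule expser)
  have T3: "(\<lambda>n. if n < 1 then 0 else 11 * x^3 / (30 * sqrt pi) * ((-(x^2))^(n-1) / fact (n-1))) sums (11 * x^3 / (30 * sqrt pi) * exp (-(x^2)))"
    by (rule shiftk[OF expser])
  have T4: "(\<lambda>n. if n < 2 then 0 else x^5 / (15 * sqrt pi) * ((-(x^2))^(n-2) / fact (n-2))) sums (x^5 / (15 * sqrt pi) * exp (-(x^2)))"
    by (rule shiftk[OF expser])
  have T5: "(\<lambda>n. if n < 3 then 0 else x^7 / (60 * sqrt pi) * f (n - 3)) sums (x^7 / (60 * sqrt pi) * S)"
    by (rule shiftk[OF sums_mult[OF fS]])
  have "(\<lambda>n. (if n = 0 then x / sqrt pi else 0) + (if n = 1 then - (x^3 / (30 * sqrt pi)) else 0)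
     + x / sqrt pi * ((-(x^2))^n / fact n)
     + (if n < 1 then 0 else 11 * x^3 / (30 * sqrt pi) * ((-(x^2))^(n-1) / fact (n-1)))
     + (if n < 2 then 0 else x^5 / (15 * sqrt pi) * ((-(x^2))^(n-2) / fact (n-2)))
     + (if n < 3 then 0 else x^7 / (60 * sqrt pi) * f (n - 3))) sums
     (x / sqrt pi + - (x^3 / (30 * sqrt pi)) + x / sqrt pi * exp (-(x^2)) + 11 * x^3 / (30 * sqrt pi) * exp (-(x^2))
      + x^5 / (15 * sqrt pi) * exp (-(x^2)) + x^7 / (60 * sqrt pi) * S)"
    by (intro sums_add T1 T1b T2 T3 T4 T5)
  also have "(\<lambda>n. (if n = 0 then x / sqrt pi else 0) + (if n = 1 then - (x^3 / (30 * sqrt pi)) else 0)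
     + x / sqrt pi * ((-(x^2))^n / fact n)
     + (if n < 1 then 0 else 11 * x^3 / (30 * sqrt pi) * ((-(x^2))^(n-1) / fact (n-1)))
     + (if n < 2 then 0 else x^5 / (15 * sqrt pi) * ((-(x^2))^(n-2) / fact (n-2)))
     + (if n < 3 then 0 else x^7 / (60 * sqrt pi) * f (n - 3))) =
     (\<lambda>n. 2 / sqrt pi * ((-1)^n / (fact n * (2 * real n + 1))) * x^(2*n+1))"
  proof
    fix n show "(if n = 0 then x / sqrt pi else 0) + (if n = 1 then - (x^3 / (30 * sqrt pi)) else 0)
     + x / sqrt pi * ((-(x^2))^n / fact n)
     + (if n < 1 then 0 else 11 * x^3 / (30 * sqrt pi) * ((-(x^2))^(n-1) / fact (n-1)))
     + (if n < 2 then 0 else x^5 / (15 * sqrt pi) * ((-(x^2))^(n-2) / fact (n-2)))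
     + (if n < 3 then 0 else x^7 / (60 * sqrt pi) * f (n - 3)) =
     2 / sqrt pi * ((-1)^n / (fact n * (2 * real n + 1))) * x^(2*n+1)"
    proof (cases "n < 3")
      case True
      hence "n = 0 \<or> n = 1 \<or> n = 2" by auto
      moreover have ?thesis if "n = 0" unfolding that by simp
      moreover have ?thesis if "n = 1"
      proof -
        have "sqrt pi \<noteq> 0" by simp
        from small3a[OF this, of x] show ?thesis unfolding that by simp
      qed
      moreover have ?thesis if "n = 2"
      proof -
        have "sqrt pi \<noteq> 0" by simp
        from small3b[OF this, of x] show ?thesis unfolding that by (simp add: eval_nat_numeral)
      qed
      ultimately show ?thesis by blast
    next
      case False
      define k where "k = n - 3"
      have N: "n = Suc (Suc (Suc k))" using False unfolding k_def by simp
      have c: "(Suc (Suc (Suc k)) = 0) = False" "(Suc (Suc (Suc k)) = 1) = False"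
        "(Suc (Suc (Suc k)) < 1) = False" "(Suc (Suc (Suc k)) < 2) = False" "(Suc (Suc (Suc k)) < 3) = False"
        "Suc (Suc (Suc k)) - 1 = Suc (Suc k)" "Suc (Suc (Suc k)) - 2 = Suc k" "Suc (Suc (Suc k)) - 3 = k" by simp_all
      have "2*Suc (Suc (Suc k))+1 = 7 + 2*k" by simp
      hence e1: "x^(2*Suc (Suc (Suc k))+1) = x^7 * (x^2)^k" by (simp only: power_add power_mult)
      have e0: "(-(x^2))^(Suc (Suc (Suc k))) = -(x^6) * ((-1)^k * (x^2)^k)" by (rule pS3)
      have e2: "(-(x^2))^(Suc (Suc k)) = x^4 * ((-1)^k * (x^2)^k)" by (rule pS2)
      have e3: "(-(x^2))^(Suc k) = -(x^2) * ((-1)^k * (x^2)^k)" by (rule pS1)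
      have e8: "fact (Suc (Suc (Suc k))) = (real k + 3) * ((real k + 2) * ((real k + 1) * fact k))" by (rule fS3)
      have e4: "fact (Suc (Suc k)) = (real k + 2) * ((real k + 1) * fact k)" by (rule fS2)
      have e5: "fact (Suc k) = (real k + 1) * fact k" by (rule fS1)
      have e6: "(-1::real)^(Suc (Suc (Suc k))) = - ((-1)^k)" by simp
      have e7: "2 * real (Suc (Suc (Suc k))) + 1 = 2 * real k + 7" by simp
      show ?thesis unfolding N
        apply (simp only: c if_False if_True)
        unfolding e0 e1 e2 e3 e4 e5 e6 e7 e8 f_eq
        by (rule alg3) simp_all
    qed
  qed
  finally have "erf x = x / sqrt pi + - (x^3 / (30 * sqrt pi)) + x / sqrt pi * exp (-(x^2)) + 11 * x^3 / (30 * sqrt pi) * exp (-(x^2))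
      + x^5 / (15 * sqrt pi) * exp (-(x^2)) + x^7 / (60 * sqrt pi) * S"
    using erf_sums sums_unique2 by blast
  also have "\<dots> = x / sqrt pi * (1 - x\<^sup>2 / 30)
      + x / sqrt pi * (1 + 11 * x\<^sup>2 / 30 + x^4 / 15) * exp (- (x\<^sup>2)) + x^7 / (60 * sqrt pi) * S"
    by (simp add: divide_simps) algebra
  finally show ?thesis using sf unfolding S_def f_def by simp
qed


theorem theorem7p2:
  fixes x :: real
  shows
   "(summable (\<lambda>k::nat. (-1)^k * (2*k+1) * x^(2*k) / ((2*k+3) * fact (k+1))) \<and>
    erf x = x / sqrt pi + x / sqrt pi * exp (- (x\<^sup>2))
      + x^3 / sqrt pi * (\<Sum>k. (-1)^k * (2*k+1) * x^(2*k) / ((2*k+3) * fact (k+1)))) \<and>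
   (summable (\<lambda>k::nat. (-1)^k * (2*k+1) * fact (k+1) * x^(2*k) /
        ((2*k+5) * (\<Prod>r=1..k. \<Sum>i=1..r. (2 * real i + 1)))) \<and>
    erf x = x / sqrt pi + x / sqrt pi * (1 + x\<^sup>2 / 3) * exp (- (x\<^sup>2))
      + x^5 / (6 * sqrt pi) * (\<Sum>k. (-1)^k * (2*k+1) * fact (k+1) * x^(2*k) /
        ((2*k+5) * (\<Prod>r=1..k. \<Sum>i=1..r. (2 * real i + 1))))) \<and>
   (summable (\<lambda>k::nat. (-1)^k * (2*k+1) * (2*k+3) * fact (k+1) * x^(2*k) /
        (3 * (2*k+7) * (\<Prod>r=2..k+1. 2 * (\<Sum>i=2..r. real i)))) \<and>
    erf x = x / sqrt pi * (1 - x\<^sup>2 / 30)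
      + x / sqrt pi * (1 + 11 * x\<^sup>2 / 30 + x^4 / 15) * exp (- (x\<^sup>2))
      + x^7 / (60 * sqrt pi) * (\<Sum>k. (-1)^k * (2*k+1) * (2*k+3) * fact (k+1) * x^(2*k) /
        (3 * (2*k+7) * (\<Prod>r=2..k+1. 2 * (\<Sum>i=2..r. real i)))))"
  using id1[of x] id2[of x] id3[of x] by blast

end
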